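(* Let $P$ be a finite poset and $q$ a positive integer such that every chain of $P$ has at most $q$ elements. Then the restriction function $R(p)=\{k\in\mathbb{Z}:1+\delta(p)\le k\le q-\nu(p)\}$ is consistent.
   Context: For $p\in P$, $\delta(p)$ is the number of elements less than $p$ in a chain of maximum size containing $p$, and $\nu(p)$ is the number of elements greater than $p$ in such a chain. A restriction function assigns to each $p$ a nonempty finite subset of $\mathbb{Z}$; it is consistent if for every cover $x\lessdot y$ in $P$, $\min R(x)<\min R(y)$ and $\max R(x)<\max R(y)$. *)

theory Defs
  imports Main
begin

definition partial_order_on_set :: "'a set \<Rightarrow> ('a \<Rightarrow> 'a \<Rightarrow> bool) \<Rightarrow> bool" where
  "partial_order_on_set P le \<longleftrightarrow>
     (\<forall>x\<in>P. le x x) \<and>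
     (\<forall>x\<in>P. \<forall>y\<in>P. le x y \<and> le y x \<longrightarrow> x = y) \<and>
     (\<forall>x\<in>P. \<forall>y\<in>P. \<forall>z\<in>P. le x y \<and> le y z \<longrightarrow> le x z)"

definition less_po :: "('a \<Rightarrow> 'a \<Rightarrow> bool) \<Rightarrow> 'a \<Rightarrow> 'a \<Rightarrow> bool" where
  "less_po le x y \<longleftrightarrow> le x y \<and> x \<noteq> y"

definition is_chain :: "'a set \<Rightarrow> ('a \<Rightarrow> 'a \<Rightarrow> bool) \<Rightarrow> 'a set \<Rightarrow> bool" where
  "is_chain P le C \<longleftrightarrow> C \<subseteq> P \<and> (\<forall>x\<in>C. \<forall>y\<in>C. le x y \<or> le y x)"

definition covers :: "'a set \<Rightarrow> ('a \<Rightarrow> 'a \<Rightarrow> bool) \<Rightarrow> 'a \<Rightarrow> 'a \<Rightarrow> bool" where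
  "covers P le x y \<longleftrightarrow> x \<in> P \<and> y \<in> P \<and> less_po le x y \<and>
     \<not> (\<exists>z\<in>P. less_po le x z \<and> less_po le z y)"

definition max_chain_through :: "'a set \<Rightarrow> ('a \<Rightarrow> 'a \<Rightarrow> bool) \<Rightarrow> 'a \<Rightarrow> 'a set \<Rightarrow> bool" where
  "max_chain_through P le p C \<longleftrightarrow> is_chain P le C \<and> p \<in> C \<and>
     (\<forall>D. is_chain P le D \<and> p \<in> D \<longrightarrow> card D \<le> card C)"

definition delta :: "'a set \<Rightarrow> ('a \<Rightarrow> 'a \<Rightarrow> bool) \<Rightarrow> 'a \<Rightarrow> nat" where
  "delta P le p = card {x \<in> (SOME C. max_chain_through P le p C). less_po le x p}"

definition nu :: "'a set \<Rightarrow> ('a \<Rightarrow> 'a \<Rightarrow> bool) \<Rightarrow> 'a \<Rightarrow> nat" where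
  "nu P le p = card {x \<in> (SOME C. max_chain_through P le p C). less_po le p x}"

definition consistent_restriction ::
  "'a set \<Rightarrow> ('a \<Rightarrow> 'a \<Rightarrow> bool) \<Rightarrow> ('a \<Rightarrow> int set) \<Rightarrow> bool" where
  "consistent_restriction P le R \<longleftrightarrow>
     (\<forall>p\<in>P. R p \<noteq> {} \<and> finite (R p)) \<and>
     (\<forall>x y. covers P le x y \<longrightarrow> Min (R x) < Min (R y) \<and> Max (R x) < Max (R y))"

end

theory Submission
  imports Defs
begin

lemma chain_dual: "is_chain P (\<lambda>x y. le y x) = is_chain P le"
  by (auto simp: is_chain_def fun_eq_iff)

lemma mct_dual: "max_chain_through P (\<lambda>x y. le y x) = max_chain_through P le"
  unfolding max_chain_through_def chain_dual[of P le] ..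

lemma nu_dual: "nu P le p = delta P (\<lambda>x y. le y x) p"
  unfolding nu_def delta_def mct_dual[of P le] less_po_def by (intro arg_cong[where f=card] Collect_cong) blast

lemma po_dual: "partial_order_on_set P le \<Longrightarrow> partial_order_on_set P (\<lambda>x y. le y x)"
  unfolding partial_order_on_set_def by blast

lemma covers_dual: "covers P (\<lambda>x y. le y x) y x = covers P le x y"
  unfolding covers_def less_po_def by blast

lemma exists_mct:
  assumes "finite P" "partial_order_on_set P le" "p \<in> P"
  shows "\<exists>C. max_chain_through P le p C"
proof -
  have "\<exists>C. (is_chain P le C \<and> p\<in>C) \<and> (\<forall>D. is_chain P le D \<and> p \<in> D \<longrightarrow> card D \<le> card C)"
  proof (rule ex_has_greatest_nat[where k="{p}" and b="card P + 1"])
    show "is_chain P le {p} \<and> p \<in> {p}"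
      using assms unfolding is_chain_def partial_order_on_set_def by auto
    show "\<forall>y. is_chain P le y \<and> p \<in> y \<longrightarrow> card y < card P + 1"
      using assms(1) by (auto simp: is_chain_def intro: card_mono le_imp_less_Suc)
  qed
  then show ?thesis unfolding max_chain_through_def by blast
qed

lemma po_trans: "partial_order_on_set P le \<Longrightarrow> x\<in>P \<Longrightarrow> y\<in>P \<Longrightarrow> z\<in>P \<Longrightarrow> le x y \<Longrightarrow> le y z \<Longrightarrow> le x z"
  unfolding partial_order_on_set_def by blast
lemma po_antisym: "partial_order_on_set P le \<Longrightarrow> x\<in>P \<Longrightarrow> y\<in>P \<Longrightarrow> le x y \<Longrightarrow> le y x \<Longrightarrow> x = y"
  unfolding partial_order_on_set_def by blast
lemma po_refl: "partial_order_on_set P le \<Longrightarrow> x\<in>P \<Longrightarrow> le x x"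
  unfolding partial_order_on_set_def by blast

definition SC where "SC P le p = (SOME C. max_chain_through P le p C)"

lemma SC_props:
  assumes "finite P" "partial_order_on_set P le" "p \<in> P"
  shows "max_chain_through P le p (SC P le p)"
  using exists_mct[OF assms] unfolding SC_def by (rule someI_ex)

lemma delta_SC: "delta P le p = card {x \<in> SC P le p. less_po le x p}"
  unfolding delta_def SC_def ..

lemma nu_SC: "nu P le p = card {x \<in> SC P le p. less_po le p x}"
  unfolding nu_def SC_def ..

lemma split_card:
  assumes "finite P" "partial_order_on_set P le" "p \<in> P" "is_chain P le C" "p \<in> C"
  shows "card C = card {x\<in>C. less_po le x p} + 1 + card {x\<in>C. less_po le p x}"
proof -
  have CP: "C \<subseteq> P" and cmp: "\<And>x. x \<in> C \<Longrightarrow> le x p \<or> le p x"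
    using assms(4,5) unfolding is_chain_def by auto
  have fC: "finite C" using assms(1) CP finite_subset by blast
  have eq: "C = ({x\<in>C. less_po le x p} \<union> {p}) \<union> {x\<in>C. less_po le p x}"
    using cmp assms(5) unfolding less_po_def by blast
  have d1: "{x\<in>C. less_po le x p} \<inter> {p} = {}" by (auto simp: less_po_def)
  have d2: "({x\<in>C. less_po le x p} \<union> {p}) \<inter> {x\<in>C. less_po le p x} = {}"
  proof (rule ccontr)
    assume "\<not> ?thesis"
    then obtain x where "x \<in> C" "less_po le x p \<or> x = p" "less_po le p x" by blast
    moreover have "x \<in> P" using CP \<open>x \<in> C\<close> by blast
    ultimately show False using po_antisym[OF assms(2) _ assms(3)] unfolding less_po_def by metis
  qed
  have "card C = card ({x\<in>C. less_po le x p} \<union> {p}) + card {x\<in>C. less_po le p x}"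
    by (subst eq, rule card_Un_disjoint) (use fC d2 in auto)
  also have "card ({x\<in>C. less_po le x p} \<union> {p}) = card {x\<in>C. less_po le x p} + 1"
    by (subst card_Un_disjoint) (use fC d1 in auto)
  finally show ?thesis .
qed

lemma delta_bound:
  assumes "finite P" "partial_order_on_set P le" "p \<in> P" "is_chain P le D"
    "\<forall>d\<in>D. less_po le d p"
  shows "card D \<le> delta P le p"
proof -
  let ?C = "SC P le p"
  have M: "max_chain_through P le p ?C" by (rule SC_props[OF assms(1-3)])
  have CP: "?C \<subseteq> P" and Ccmp: "\<And>x y. x \<in> ?C \<Longrightarrow> y \<in> ?C \<Longrightarrow> le x y \<or> le y x"
    using M unfolding max_chain_through_def is_chain_def by auto
  have DP: "D \<subseteq> P" and Dcmp: "\<And>x y. x \<in> D \<Longrightarrow> y \<in> D \<Longrightarrow> le x y \<or> le y x"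
    using assms(4) unfolding is_chain_def by auto
  have Dlt: "\<And>d. d \<in> D \<Longrightarrow> le d p \<and> d \<noteq> p" using assms(5) unfolding less_po_def by blast
  let ?B = "{x\<in>?C. less_po le p x}"
  have Bgt: "\<And>b. b \<in> ?B \<Longrightarrow> le p b \<and> b \<noteq> p" unfolding less_po_def by blast
  let ?D = "D \<union> {p} \<union> ?B"
  have DB: "le d b" if "d \<in> D" "b \<in> ?B" for d b
    using po_trans[OF assms(2), of d p b] Dlt[OF that(1)] Bgt[OF that(2)] that DP CP assms(3) by blast
  have ch: "is_chain P le ?D"
    unfolding is_chain_def
  proof (intro conjI ballI)
    show "?D \<subseteq> P" using DP CP assms(3) by blast
    fix x y assume x: "x \<in> ?D" and y: "y \<in> ?D"
    show "le x y \<or> le y x"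
      using x y Dcmp Ccmp DB Dlt Bgt po_refl[OF assms(2,3)] by blast
  qed
  have pD: "p \<in> ?D" by simp
  have "card ?D \<le> card ?C" using M ch pD unfolding max_chain_through_def by blast
  moreover have "card ?C = delta P le p + 1 + card ?B"
    using split_card[OF assms(1-3)] M unfolding max_chain_through_def delta_SC by blast
  moreover have "{x\<in>?D. less_po le x p} = D"
  proof -
    have "\<not> less_po le b p" if "b \<in> ?B" for b
      using Bgt[OF that] po_antisym[OF assms(2), of b p] that CP assms(3) unfolding less_po_def by blast
    then show ?thesis using assms(5) by (auto simp: less_po_def)
  qed
  moreover have "{x\<in>?D. less_po le p x} = ?B"
  proof -
    have "\<not> less_po le p d" if "d \<in> D" for d
      using Dlt[OF that] po_antisym[OF assms(2), of d p] that DP assms(3) unfolding less_po_def by blast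
    then show ?thesis by (auto simp: less_po_def)
  qed
  moreover have "card ?D = card {x\<in>?D. less_po le x p} + 1 + card {x\<in>?D. less_po le p x}"
    by (rule split_card[OF assms(1-3) ch pD])
  ultimately show ?thesis by simp
qed

lemma delta_mono:
  assumes "finite P" "partial_order_on_set P le" "covers P le x y"
  shows "delta P le x < delta P le y"
proof -
  have xP: "x \<in> P" and yP: "y \<in> P" and xy: "less_po le x y" using assms(3) by (auto simp: covers_def)
  let ?C = "SC P le x"
  have M: "max_chain_through P le x ?C" by (rule SC_props[OF assms(1,2) xP])
  have CP: "?C \<subseteq> P" and Ccmp: "\<And>u v. u \<in> ?C \<Longrightarrow> v \<in> ?C \<Longrightarrow> le u v \<or> le v u" and xC: "x \<in> ?C"
    using M unfolding max_chain_through_def is_chain_def by auto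
  let ?A = "{z\<in>?C. less_po le z x}"
  have fA: "finite ?A" using CP assms(1) by (auto intro: finite_subset)
  have ch: "is_chain P le (insert x ?A)"
    unfolding is_chain_def
  proof (intro conjI ballI)
    show "insert x ?A \<subseteq> P" using CP xP by blast
    fix u v assume "u \<in> insert x ?A" "v \<in> insert x ?A"
    then have "u \<in> ?C" "v \<in> ?C" using xC by auto
    then show "le u v \<or> le v u" using Ccmp by blast
  qed
  have lt: "\<forall>d\<in>insert x ?A. less_po le d y"
  proof
    fix d assume d: "d \<in> insert x ?A"
    show "less_po le d y"
    proof (cases "d = x")
      case True then show ?thesis using xy by simp
    next
      case False
      then have dA: "le d x" "d \<noteq> x" "d \<in> P" using d CP unfolding less_po_def by auto
      have "le d y" using po_trans[OF assms(2) dA(3) xP yP dA(1)] xy unfolding less_po_def by blast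
      moreover have "d \<noteq> y"
      proof
        assume "d = y"
        then have "x = y" using po_antisym[OF assms(2) xP yP] xy dA(1) unfolding less_po_def by blast
        then show False using xy unfolding less_po_def by blast
      qed
      ultimately show ?thesis unfolding less_po_def by blast
    qed
  qed
  have "card (insert x ?A) \<le> delta P le y" by (rule delta_bound[OF assms(1,2) yP ch lt])
  moreover have "card (insert x ?A) = delta P le x + 1"
    using fA by (simp add: delta_SC less_po_def)
  ultimately show ?thesis by simp
qed

lemma sum_bound:
  assumes "finite P" "partial_order_on_set P le" "p \<in> P" "\<And>C. is_chain P le C \<Longrightarrow> card C \<le> q"
  shows "delta P le p + 1 + nu P le p \<le> q"
proof -
  have M: "max_chain_through P le p (SC P le p)" by (rule SC_props[OF assms(1-3)])
  then have "card (SC P le p) = delta P le p + 1 + nu P le p"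
    using split_card[OF assms(1-3)] unfolding max_chain_through_def delta_SC nu_SC by blast
  moreover have "card (SC P le p) \<le> q" using M assms(4) unfolding max_chain_through_def by blast
  ultimately show ?thesis by simp
qed

lemma MinMax_int:
  fixes a b :: int assumes "a \<le> b"
  shows "Min {k. a \<le> k \<and> k \<le> b} = a" "Max {k. a \<le> k \<and> k \<le> b} = b"
    "{k. a \<le> k \<and> k \<le> b} \<noteq> {}" "finite {k. a \<le> k \<and> k \<le> b}"
proof -
  have e: "{k. a \<le> k \<and> k \<le> b} = {a..b}" by (auto simp: atLeastAtMost_def)
  have f: "finite {a..b}" by (rule finite_atLeastAtMost_int)
  show "finite {k. a \<le> k \<and> k \<le> b}" unfolding e by (rule f)
  show "Min {k. a \<le> k \<and> k \<le> b} = a" unfolding e by (rule Min_eqI[OF f]) (use assms in simp_all)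
  show "Max {k. a \<le> k \<and> k \<le> b} = b" unfolding e by (rule Max_eqI[OF f]) (use assms in simp_all)
  show "{k. a \<le> k \<and> k \<le> b} \<noteq> {}" using assms by auto
qed

theorem lemma2p18:
  fixes P :: "'a set" and le :: "'a \<Rightarrow> 'a \<Rightarrow> bool" and q :: nat
  assumes "finite P"
    and "partial_order_on_set P le"
    and "q > 0"
    and "\<And>C. is_chain P le C \<Longrightarrow> card C \<le> q"
  shows "consistent_restriction P le
           (\<lambda>p. {k :: int. 1 + int (delta P le p) \<le> k \<and> k \<le> int q - int (nu P le p)})"
proof -
  have ab: "1 + int (delta P le p) \<le> int q - int (nu P le p)" if "p \<in> P" for p
    using sum_bound[OF assms(1,2) that assms(4)] by linarith
  show ?thesis unfolding consistent_restriction_def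
  proof (intro conjI ballI allI impI)
    fix p assume "p \<in> P"
    from MinMax_int[OF ab[OF this]] show "{k :: int. 1 + int (delta P le p) \<le> k \<and> k \<le> int q - int (nu P le p)} \<noteq> {}"
      "finite {k :: int. 1 + int (delta P le p) \<le> k \<and> k \<le> int q - int (nu P le p)}" by auto
  next
    fix x y assume c: "covers P le x y"
    then have xP: "x \<in> P" and yP: "y \<in> P" by (auto simp: covers_def)
    have d: "delta P le x < delta P le y" by (rule delta_mono[OF assms(1,2) c])
    have n: "nu P le y < nu P le x"
      unfolding nu_dual
      by (rule delta_mono[OF assms(1) po_dual[OF assms(2)]]) (rule covers_dual[of P le y x, THEN iffD2, OF c])
    show "Min {k :: int. 1 + int (delta P le x) \<le> k \<and> k \<le> int q - int (nu P le x)}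
        < Min {k :: int. 1 + int (delta P le y) \<le> k \<and> k \<le> int q - int (nu P le y)}"
      using MinMax_int(1)[OF ab[OF xP]] MinMax_int(1)[OF ab[OF yP]] d by simp
    show "Max {k :: int. 1 + int (delta P le x) \<le> k \<and> k \<le> int q - int (nu P le x)}
        < Max {k :: int. 1 + int (delta P le y) \<le> k \<and> k \<le> int q - int (nu P le y)}"
      using MinMax_int(2)[OF ab[OF xP]] MinMax_int(2)[OF ab[OF yP]] n by simp
  qed
qed

end
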